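(* Let $q\in\mathrm{Prod}(\mathcal H_p)$ be $\nu$-balanced. For $A\in\mathrm{Herm}(\mathcal H_p,q)$ define $D_q\mu^E(A):=\frac{d}{dt}\big|_{t=0}\int_X\Pi_{e^{tA/2}V_x}\,d\nu(x)$ and let $D_q\mathcal T_{E_p}(A)$ be the $q$-Hermitian operator $B$ with $\frac{d}{dt}|_0\mathcal T_{E_p}(q(e^{tA}\cdot,\cdot))=q(B\cdot,\cdot)$. Then $$\frac{\dim\mathcal H_p}{\mathrm{Vol}(X,\nu)\mathrm{rk}(E)}D_q\mu^E(A)=A-D_q\mathcal T_{E_p}(A).$$
   Context: $X$ compact complex manifold, $L$ positive holomorphic Hermitian line bundle, $E$ holomorphic vector bundle, $\nu$ smooth positive measure, $\mathcal H_p=H^0(X,E\otimes L^p)$, $p$ large so that evaluations $s\mapsto s(x)$ are surjective. $\Pi_q(x)$: $q$-orthogonal projection with kernel $\{s:s(x)=0\}$; $\mathrm{FS}(q)(s_1(x),s_2(x))=q(\Pi_q(x)s_1,s_2)$; $\mathrm{Hilb}_{E_p}(h)=\frac{\dim\mathcal H_p}{\mathrm{Vol}(X,\nu)\mathrm{rk}(E)}\int_Xh\,d\nu$; $\mathcal T_{E_p}=\mathrm{Hilb}_{E_p}\circ\mathrm{FS}$; $q$ is $\nu$-balanced if $\mathcal T_{E_p}(q)=q$. $V_x\subset\mathcal H_p$ is the $q$-orthogonal complement of $\{s:s(x)=0\}$ (a $\mathrm{rk}(E)$-dimensional subspace, the image of $x$ under the Kodaira map to the Grassmannian), and for a subspace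 $W$, $\Pi_W$ denotes the $q$-orthogonal projection onto $W$ (so $\Pi_{V_x}=\Pi_q(x)$). The moment map is $\mu^E(G)=\int_X\Pi_{GV_x}d\nu(x)$ for $G\in\mathrm{GL}(\mathcal H_p)$. *)

theory Defs
  imports "HOL-Analysis.Analysis"
begin

text \<open>H_p is identified with complex^'n
(dim H_p = CARD('n)); the fibre of E (x) L^p at x is identified with complex^'r
(rk E = CARD('r)) via a measurable trivialisation; the evaluation map
s |-> s(x) is the matrix Ev x.\<close>

definition qform :: "complex^'n^'n \<Rightarrow> complex^'n \<Rightarrow> complex^'n \<Rightarrow> complex" where
  "qform Q u v = (\<Sum>i\<in>UNIV. (Q *v u) $ i * cnj (v $ i))"

definition is_prod :: "complex^'n^'n \<Rightarrow> bool" where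
  "is_prod Q \<longleftrightarrow> (\<forall>u v. qform Q u v = cnj (qform Q v u)) \<and>
                 (\<forall>v. v \<noteq> 0 \<longrightarrow> 0 < Re (qform Q v v))"

definition q_herm :: "complex^'n^'n \<Rightarrow> complex^'n^'n \<Rightarrow> bool" where
  "q_herm Q A \<longleftrightarrow> (\<forall>u v. qform Q (A *v u) v = qform Q u (A *v v))"

definition qproj :: "complex^'n^'n \<Rightarrow> (complex^'n) set \<Rightarrow> complex^'n^'n" where
  "qproj Q W = (THE P. \<forall>v. P *v v \<in> W \<and> (\<forall>w\<in>W. qform Q (v - P *v v) w = 0))"

definition ker_ev :: "('x \<Rightarrow> complex^'n^'r) \<Rightarrow> 'x \<Rightarrow> (complex^'n) set" where
  "ker_ev Ev x = {s. Ev x *v s = 0}"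

definition Vsp :: "complex^'n^'n \<Rightarrow> ('x \<Rightarrow> complex^'n^'r) \<Rightarrow> 'x \<Rightarrow> (complex^'n) set" where
  "Vsp Q Ev x = {v. \<forall>s\<in>ker_ev Ev x. qform Q s v = 0}"

text \<open>Fubini--Study metric FS(q) on the fibre at x:
  FS(q)(s1(x), s2(x)) = q(Pi_q(x) s1, s2), as a matrix on complex^'r.\<close>
definition FS :: "complex^'n^'n \<Rightarrow> ('x \<Rightarrow> complex^'n^'r) \<Rightarrow> 'x \<Rightarrow> complex^'r^'r" where
  "FS Q Ev x = (\<chi> i j. qform Q (qproj Q (Vsp Q Ev x) *v (SOME s. Ev x *v s = axis j 1))
                                  (SOME s. Ev x *v s = axis i 1))"

definition Hilb :: "'x measure \<Rightarrow> ('x \<Rightarrow> complex^'n^'r) \<Rightarrow> ('x \<Rightarrow> complex^'r^'r) \<Rightarrow> complex^'n^'n" where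
  "Hilb \<nu> Ev h = (real CARD('n) / (measure \<nu> (space \<nu>) * real CARD('r))) *\<^sub>R
     (\<chi> i j. integral\<^sup>L \<nu> (\<lambda>x. qform (h x) (Ev x *v axis j 1) (Ev x *v axis i 1)))"

definition Tmap :: "'x measure \<Rightarrow> ('x \<Rightarrow> complex^'n^'r) \<Rightarrow> complex^'n^'n \<Rightarrow> complex^'n^'n" where
  "Tmap \<nu> Ev Q = Hilb \<nu> Ev (FS Q Ev)"

definition balanced :: "'x measure \<Rightarrow> ('x \<Rightarrow> complex^'n^'r) \<Rightarrow> complex^'n^'n \<Rightarrow> bool" where
  "balanced \<nu> Ev Q \<longleftrightarrow> Tmap \<nu> Ev Q = Q"

definition mu :: "'x measure \<Rightarrow> complex^'n^'n \<Rightarrow> ('x \<Rightarrow> complex^'n^'r) \<Rightarrow> complex^'n^'n \<Rightarrow> complex^'n^'n" where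
  "mu \<nu> Q Ev G = integral\<^sup>L \<nu> (\<lambda>x. qproj Q ((\<lambda>v. G *v v) ` Vsp Q Ev x))"

primrec mpow :: "complex^'n^'n \<Rightarrow> nat \<Rightarrow> complex^'n^'n" where
  "mpow A 0 = mat 1"
| "mpow A (Suc k) = A ** mpow A k"

definition mexp :: "complex^'n^'n \<Rightarrow> complex^'n^'n" where
  "mexp A = (\<Sum>k. (1 / fact k) *\<^sub>R mpow A k)"

end

theory Submission
  imports Defs
begin


typedef (overloaded) ('n::finite) cmat = "UNIV :: ((complex^'n) \<Rightarrow>\<^sub>L (complex^'n)) set"
  morphisms rep Abs by simp

setup_lifting type_definition_cmat

instantiation cmat :: (finite) real_normed_algebra_1
begin
lift_definition zero_cmat :: "('n::finite) cmat" is "0::((complex^('n::finite)) \<Rightarrow>\<^sub>L (complex^'n))" .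
lift_definition one_cmat :: "('n::finite) cmat" is "id_blinfun::((complex^('n::finite)) \<Rightarrow>\<^sub>L (complex^'n))" .
lift_definition plus_cmat :: "('n::finite) cmat \<Rightarrow> 'n cmat \<Rightarrow> 'n cmat" is "(+)::((complex^('n::finite)) \<Rightarrow>\<^sub>L (complex^'n)) \<Rightarrow> _ \<Rightarrow> _" .
lift_definition minus_cmat :: "('n::finite) cmat \<Rightarrow> 'n cmat \<Rightarrow> 'n cmat" is "(-)::((complex^('n::finite)) \<Rightarrow>\<^sub>L (complex^'n)) \<Rightarrow> _ \<Rightarrow> _" .
lift_definition uminus_cmat :: "('n::finite) cmat \<Rightarrow> 'n cmat" is "uminus::((complex^('n::finite)) \<Rightarrow>\<^sub>L (complex^'n)) \<Rightarrow> _" .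
lift_definition times_cmat :: "('n::finite) cmat \<Rightarrow> 'n cmat \<Rightarrow> 'n cmat" is "(o\<^sub>L)::((complex^('n::finite)) \<Rightarrow>\<^sub>L (complex^'n)) \<Rightarrow> _ \<Rightarrow> _" .
lift_definition scaleR_cmat :: "real \<Rightarrow> ('n::finite) cmat \<Rightarrow> 'n cmat" is "scaleR::real \<Rightarrow> ((complex^('n::finite)) \<Rightarrow>\<^sub>L (complex^'n)) \<Rightarrow> _" .
lift_definition norm_cmat :: "('n::finite) cmat \<Rightarrow> real" is "norm::((complex^('n::finite)) \<Rightarrow>\<^sub>L (complex^'n)) \<Rightarrow> real" .
definition dist_cmat :: "('n::finite) cmat \<Rightarrow> 'n cmat \<Rightarrow> real" where "dist_cmat a b = norm (a - b)"
definition sgn_cmat :: "('n::finite) cmat \<Rightarrow> 'n cmat" where "sgn_cmat x = scaleR (inverse (norm x)) x"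
definition uniformity_cmat :: "(('n::finite) cmat \<times> 'n cmat) filter" where
  "uniformity_cmat = (INF e\<in>{0 <..}. principal {(x, y). dist x y < e})"
definition open_cmat :: "('n::finite) cmat set \<Rightarrow> bool" where
  "open_cmat S = (\<forall>x\<in>S. \<forall>\<^sub>F (x', y) in uniformity. x' = x \<longrightarrow> y \<in> S)"
instance
  apply standard
  unfolding dist_cmat_def sgn_cmat_def uniformity_cmat_def open_cmat_def
  subgoal by transfer (simp add: algebra_simps)
  subgoal by transfer (simp add: algebra_simps)
  subgoal by transfer (simp add: algebra_simps)
  subgoal by transfer (simp add: algebra_simps)
  subgoal by transfer (simp add: algebra_simps)
  subgoal by transfer (simp add: algebra_simps)
  subgoal by transfer (simp add: algebra_simps)
  subgoal by transfer (simp add: algebra_simps)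
  subgoal by transfer (simp add: algebra_simps)
  subgoal by transfer (auto intro!: blinfun_eqI)
  subgoal by transfer (auto intro!: blinfun_eqI simp: blinfun.bilinear_simps)
  subgoal by transfer (auto intro!: blinfun_eqI simp: blinfun.bilinear_simps)
  subgoal by transfer (auto intro!: blinfun_eqI simp: blinfun.bilinear_simps)
  subgoal by transfer (auto intro!: blinfun_eqI simp: blinfun.bilinear_simps)
  subgoal by transfer (auto intro!: blinfun_eqI)
  subgoal by transfer (auto intro!: blinfun_eqI)
  subgoal by transfer (metis norm_blinfun_id norm_zero zero_neq_one)
  subgoal by (rule refl)
  subgoal by (rule refl)
  subgoal by (rule refl)
  subgoal by (rule refl)
  subgoal by transfer simp
  subgoal by transfer (rule norm_triangle_ineq)
  subgoal by transfer simp
  subgoal by transfer (rule norm_blinfun_compose)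
  subgoal by transfer simp
  done
end

lemma dist_cmat_rep: "dist a b = dist (rep a) (rep b)"
  by (simp add: dist_cmat_def dist_norm norm_cmat.rep_eq minus_cmat.rep_eq)

instance cmat :: (finite) banach
proof
  fix X :: "nat \<Rightarrow> ('n::finite) cmat"
  assume "Cauchy X"
  then have "Cauchy (\<lambda>n. rep (X n))" by (simp add: Cauchy_def dist_cmat_rep)
  then obtain L where L: "(\<lambda>n. rep (X n)) \<longlonglongrightarrow> L" using convergent_def Cauchy_convergent_iff by blast
  have "X \<longlonglongrightarrow> Abs L"
    using L unfolding lim_sequentially by (simp add: dist_cmat_rep Abs_inverse)
  then show "convergent X" by (auto simp: convergent_def)
qed


lemma norm_vec_le_sum: "norm (x::'a::real_normed_vector^'n) \<le> (\<Sum>i\<in>UNIV. norm (x$i))"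
  by (simp add: norm_vec_def L2_set_le_sum)

lemma linear_mv: "linear (\<lambda>v::complex^'n. (A::complex^'n^'m) *v v)"
proof -
  have c: "\<And>r (z::complex). r *\<^sub>R z = of_real r * z" by (simp add: scaleR_conv_of_real)
  show ?thesis
    by (rule linearI) (simp_all add: vec_eq_iff matrix_vector_mult_def sum.distrib
        sum_distrib_left c algebra_simps)
qed

lemma bl_mv: "bounded_linear (\<lambda>v::complex^'n. (A::complex^'n^'m) *v v)"
  using linear_mv linear_conv_bounded_linear by blast

lemma scaleR_mv: "(r *\<^sub>R (A::complex^'n^'m)) *v v = r *\<^sub>R (A *v v)"
proof -
  have c: "\<And>r (z::complex). r *\<^sub>R z = of_real r * z" by (simp add: scaleR_conv_of_real)
  show ?thesis
    by (simp add: vec_eq_iff matrix_vector_mult_def sum_distrib_left c algebra_simps)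
qed

definition phi :: "complex^'n^'n \<Rightarrow> ('n::finite) cmat" where
  "phi A = Abs (Blinfun (\<lambda>v. A *v v))"

definition psi :: "('n::finite) cmat \<Rightarrow> complex^'n^'n" where
  "psi M = (\<chi> i j. blinfun_apply (rep M) (axis j 1) $ i)"

lemma rep_phi: "blinfun_apply (rep (phi A)) v = A *v v"
  by (simp add: phi_def Abs_inverse bounded_linear_Blinfun_apply bl_mv)

lemma mv_axis: "((A::'a::semiring_1^'n^'m) *v axis j 1) $ i = A $ i $ j"
  by (simp add: matrix_vector_mult_def axis_def if_distrib cong: if_cong)

lemma psi_phi[simp]: "psi (phi A) = A"
  by (simp add: psi_def rep_phi mv_axis vec_eq_iff)

lemma phi_mult: "phi (A ** B) = phi A * phi B"
  by (rule rep_inject[THEN iffD1], rule blinfun_eqI)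
     (simp add: rep_phi times_cmat.rep_eq matrix_vector_mul_assoc)

lemma phi_one: "phi (mat 1) = 1"
  by (rule rep_inject[THEN iffD1], rule blinfun_eqI) (simp add: rep_phi one_cmat.rep_eq)

lemma linear_phi: "linear (phi :: complex^'n^'n \<Rightarrow> ('n::finite) cmat)"
  apply (rule linearI)
   apply (rule rep_inject[THEN iffD1], rule blinfun_eqI)
   apply (simp add: rep_phi plus_cmat.rep_eq plus_blinfun.rep_eq matrix_vector_mult_add_rdistrib)
  apply (rule rep_inject[THEN iffD1], rule blinfun_eqI)
  apply (simp add: rep_phi scaleR_cmat.rep_eq scaleR_blinfun.rep_eq)
  apply (simp add: scaleR_mv)

  done

lemma bl_phi: "bounded_linear (phi :: complex^'n^'n \<Rightarrow> ('n::finite) cmat)"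
  using linear_phi linear_conv_bounded_linear by blast

lemma bl_psi: "bounded_linear (psi :: ('n::finite) cmat \<Rightarrow> complex^'n^'n)"
proof (rule bounded_linear_intro[where K="real CARD('n) * real CARD('n)"])
  fix x y :: "'n cmat" and r :: real
  show "psi (x + y) = psi x + psi y"
    by (simp add: psi_def plus_cmat.rep_eq vec_eq_iff blinfun.bilinear_simps)
  show "psi (r *\<^sub>R x) = r *\<^sub>R psi x"
    by (simp add: psi_def scaleR_cmat.rep_eq scaleR_blinfun.rep_eq vec_eq_iff)
  have e: "norm (blinfun_apply (rep x) (axis j 1) $ i) \<le> norm x" for i j
  proof -
    have "norm (blinfun_apply (rep x) (axis j 1) $ i) \<le> norm (blinfun_apply (rep x) (axis j (1::complex)))"
      by (rule Finite_Cartesian_Product.norm_nth_le)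
    also have "\<dots> \<le> norm (rep x) * norm (axis j (1::complex))" by (rule norm_blinfun)
    also have "\<dots> = norm x" by (simp add: norm_cmat.rep_eq)
    finally show ?thesis .
  qed
  have "norm (psi x) \<le> (\<Sum>i\<in>UNIV. norm (psi x $ i))" by (rule norm_vec_le_sum)
  also have "\<dots> \<le> (\<Sum>i\<in>(UNIV::'n set). \<Sum>j\<in>(UNIV::'n set). norm (psi x $ i $ j))"
    by (rule sum_mono) (rule norm_vec_le_sum)
  also have "\<dots> \<le> (\<Sum>i\<in>(UNIV::'n set). \<Sum>j\<in>(UNIV::'n set). norm x)"
    by (intro sum_mono) (simp add: psi_def e)
  also have "\<dots> = norm x * (real CARD('n) * real CARD('n))" by simp
  finally show "norm (psi x) \<le> norm x * (real CARD('n) * real CARD('n))" .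
qed

lemma phi_scaleR: "phi (r *\<^sub>R A) = r *\<^sub>R phi A"
  by (rule rep_inject[THEN iffD1], rule blinfun_eqI)
     (simp add: rep_phi scaleR_cmat.rep_eq scaleR_blinfun.rep_eq scaleR_mv)

lemma phi_add: "phi (A + B) = phi A + phi B"
  by (rule rep_inject[THEN iffD1], rule blinfun_eqI)
     (simp add: rep_phi plus_cmat.rep_eq plus_blinfun.rep_eq matrix_vector_mult_add_rdistrib)

lemma phi_zero: "phi 0 = 0"
  by (rule rep_inject[THEN iffD1], rule blinfun_eqI)
     (simp add: rep_phi zero_cmat.rep_eq)

lemma inj_phi: "inj phi"
  by (metis injI psi_phi)

lemma phi_mpow: "phi (mpow A k) = phi A ^ k"
  by (induct k) (simp_all add: phi_one phi_mult)

lemma mexp_sums: "(\<lambda>k. (1 / fact k) *\<^sub>R mpow A k) sums mexp A"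
  and phi_mexp: "phi (mexp A) = exp (phi A)"
proof -
  have t: "(1 / fact k) *\<^sub>R mpow A k = psi (phi A ^ k /\<^sub>R fact k)" for k
  proof -
    have "psi (phi A ^ k /\<^sub>R fact k) = psi (phi ((1 / fact k) *\<^sub>R mpow A k))"
      by (simp add: phi_mpow phi_scaleR divide_inverse)
    then show ?thesis by simp
  qed
  have s: "(\<lambda>k. (1 / fact k) *\<^sub>R mpow A k) sums psi (exp (phi A))"
    unfolding t by (rule bounded_linear.sums[OF bl_psi exp_converges])
  then show ss: "(\<lambda>k. (1 / fact k) *\<^sub>R mpow A k) sums mexp A"
    by (simp add: mexp_def sums_unique[OF s, symmetric])
  have "(\<lambda>k. phi ((1 / fact k) *\<^sub>R mpow A k)) sums phi (mexp A)"
    by (rule bounded_linear.sums[OF bl_phi ss])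
  moreover have "phi ((1 / fact k) *\<^sub>R mpow A k) = phi A ^ k /\<^sub>R fact k" for k
    by (simp add: phi_mpow phi_scaleR divide_inverse)
  ultimately have "(\<lambda>k. phi A ^ k /\<^sub>R fact k) sums phi (mexp A)" by simp
  then show "phi (mexp A) = exp (phi A)"
    using exp_converges sums_unique2 by blast
qed

lemma mexp_add: "mexp (a *\<^sub>R A) ** mexp (b *\<^sub>R A) = mexp ((a + b) *\<^sub>R A)"
proof -
  have c: "(a *\<^sub>R phi A) * (b *\<^sub>R phi A) = (b *\<^sub>R phi A) * (a *\<^sub>R phi A)"
    by (simp add: mult_scaleR_left mult_scaleR_right)
  have "phi (mexp (a *\<^sub>R A) ** mexp (b *\<^sub>R A)) = exp (a *\<^sub>R phi A) * exp (b *\<^sub>R phi A)"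
    by (simp only: phi_mult phi_mexp phi_scaleR)
  also have "\<dots> = exp (a *\<^sub>R phi A + b *\<^sub>R phi A)"
    by (rule exp_add_commuting[OF c, symmetric])
  also have "\<dots> = phi (mexp ((a + b) *\<^sub>R A))"
    by (simp only: phi_mexp phi_scaleR scaleR_add_left phi_add)
  finally have "phi (mexp (a *\<^sub>R A) ** mexp (b *\<^sub>R A)) = phi (mexp ((a + b) *\<^sub>R A))" .
  then show ?thesis by (rule injD[OF inj_phi])
qed

lemma mexp_zero: "mexp 0 = mat 1"
proof -
  have "phi (mexp 0) = phi (mat 1 :: complex^'n^'n)"
    by (simp add: phi_mexp phi_one phi_zero)
  then show ?thesis by (rule injD[OF inj_phi])
qed

lemma mexp_deriv: "((\<lambda>t. mexp (t *\<^sub>R A)) has_vector_derivative A) (at 0)"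
proof -
  have e: "mexp (t *\<^sub>R A) = psi (exp (t *\<^sub>R phi A))" for t
    by (metis psi_phi phi_mexp phi_scaleR)
  have "((\<lambda>t. psi (exp (t *\<^sub>R phi A))) has_vector_derivative psi (exp (0 *\<^sub>R phi A) * phi A)) (at 0)"
    by (rule bounded_linear.has_vector_derivative[OF bl_psi exp_scaleR_has_vector_derivative_right])
  then show ?thesis by (simp add: e)
qed



definition adjm :: "complex^'a^'b \<Rightarrow> complex^'b^'a" where
  "adjm M = (\<chi> i j. cnj (M $ j $ i))"

definition cin :: "complex^'n \<Rightarrow> complex^'n \<Rightarrow> complex" where
  "cin u v = (\<Sum>i\<in>UNIV. u $ i * cnj (v $ i))"

lemma qform_cin: "qform Q u v = cin (Q *v u) v"
  by (simp add: qform_def cin_def)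

lemma cin_adj: "cin (M *v u) v = cin u (adjm M *v v)"
proof -
  have "cin (M *v u) v = (\<Sum>i\<in>UNIV. \<Sum>j\<in>UNIV. M $ i $ j * u $ j * cnj (v $ i))"
    by (simp add: cin_def matrix_vector_mult_def sum_distrib_right)
  also have "\<dots> = (\<Sum>j\<in>UNIV. \<Sum>i\<in>UNIV. M $ i $ j * u $ j * cnj (v $ i))"
    by (rule sum.swap)
  also have "\<dots> = cin u (adjm M *v v)"
    by (simp add: cin_def matrix_vector_mult_def adjm_def sum_distrib_left mult_ac)
  finally show ?thesis .
qed

lemma cin_axis: "cin w (axis i 1) = w $ i"
  by (simp add: cin_def axis_def if_distrib cong: if_cong)

lemma cin_axis_mat: "cin (A *v axis j 1) (axis i 1) = A $ i $ j"
  by (simp add: cin_axis mv_axis)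

lemma cin_add_left: "cin (u + w) v = cin u v + cin w v"
  by (simp add: cin_def algebra_simps sum.distrib)
lemma cin_add_right: "cin u (v + w) = cin u v + cin u w"
  by (simp add: cin_def algebra_simps sum.distrib)
lemma cin_diff_left: "cin (u - w) v = cin u v - cin w v"
  by (simp add: cin_def algebra_simps sum_subtractf)
lemma cin_diff_right: "cin u (v - w) = cin u v - cin u w"
  by (simp add: cin_def algebra_simps sum_subtractf)
lemma cin_smult_left: "cin (c *s u) v = c * cin u v"
  by (simp add: cin_def sum_distrib_left mult_ac)
lemma cin_smult_right: "cin u (c *s v) = cnj c * cin u v"
  by (simp add: cin_def sum_distrib_left mult_ac)
lemma cin_cnj: "cnj (cin u v) = cin v u"
  by (simp add: cin_def mult_ac)
lemma cin_zero_left[simp]: "cin 0 v = 0" by (simp add: cin_def)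
lemma cin_zero_right[simp]: "cin u 0 = 0" by (simp add: cin_def)

lemma cin_self: "cin u u = of_real (\<Sum>i\<in>UNIV. (cmod (u $ i))\<^sup>2)"
proof -
  have "cin u u = (\<Sum>i\<in>UNIV. complex_of_real ((cmod (u $ i))\<^sup>2))"
    unfolding cin_def by (rule sum.cong) (simp_all only: complex_norm_square)
  then show ?thesis by (simp only: of_real_sum)
qed

lemma cin_self_eq0: "cin u u = 0 \<Longrightarrow> u = 0"
proof -
  assume "cin u u = 0"
  then have "(\<Sum>i\<in>UNIV. (cmod (u $ i))\<^sup>2) = 0" unfolding cin_self of_real_eq_0_iff .
  then have "\<forall>i\<in>UNIV. (cmod (u $ i))\<^sup>2 = 0" by (simp add: sum_nonneg_eq_0_iff)
  then show "u = 0" by (simp add: vec_eq_iff)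
qed

lemma mat_eq_cin: "(\<And>u v. cin (A *v u) v = cin (B *v u) v) \<Longrightarrow> A = B"
  by (metis cin_axis_mat vec_eq_iff)

lemma adjm_mult: "adjm (A ** B) = adjm B ** adjm A"
  by (simp add: adjm_def matrix_matrix_mult_def vec_eq_iff mult.commute)
lemma adjm_adjm[simp]: "adjm (adjm A) = A"
  by (simp add: adjm_def vec_eq_iff)
lemma adjm_one[simp]: "adjm (mat 1) = mat 1"
  by (simp add: adjm_def mat_def vec_eq_iff)
lemma adjm_add: "adjm (A + B) = adjm A + adjm B"
  by (simp add: adjm_def vec_eq_iff)
lemma adjm_scaleR: "adjm (r *\<^sub>R A) = r *\<^sub>R adjm A"
proof -
  have c: "\<And>r (z::complex). r *\<^sub>R z = of_real r * z" by (simp add: scaleR_conv_of_real)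
  show ?thesis by (simp add: adjm_def vec_eq_iff c)
qed

lemma cin_adj2: "cin u (M *v v) = cin (adjm M *v u) v"
  by (metis adjm_adjm cin_adj)

definition good :: "complex^'n^'n \<Rightarrow> complex^'n^'n \<Rightarrow> bool" where
  "good Q Qi \<longleftrightarrow> adjm Q = Q \<and> Q ** Qi = mat 1 \<and> Qi ** Q = mat 1 \<and>
     (\<forall>v. v \<noteq> 0 \<longrightarrow> 0 < Re (cin (Q *v v) v))"


lemma mm_scaleR_right: "(A::complex^'n^'m) ** (r *\<^sub>R B) = r *\<^sub>R (A ** (B::complex^'k^'n))"
proof -
  have c: "\<And>r (z::complex). r *\<^sub>R z = of_real r * z" by (simp add: scaleR_conv_of_real)
  show ?thesis by (simp add: vec_eq_iff matrix_matrix_mult_def c sum_distrib_left mult_ac)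
qed

lemma mm_scaleR_left: "(r *\<^sub>R A) ** (B::complex^'k^'n) = r *\<^sub>R ((A::complex^'n^'m) ** B)"
proof -
  have c: "\<And>r (z::complex). r *\<^sub>R z = of_real r * z" by (simp add: scaleR_conv_of_real)
  show ?thesis by (simp add: vec_eq_iff matrix_matrix_mult_def c sum_distrib_left mult_ac)
qed

lemma matrix_add_rdistrib': "((B + C) ** A) = (B ** A) + (C ** (A::'a::semiring_1^'k^'n))"
  by (vector matrix_matrix_mult_def sum.distrib[symmetric] field_simps)

lemma bl_lr: "bounded_linear (\<lambda>X::complex^'n^'n. (L::complex^'n^'m) ** X ** (R::complex^'k^'n))"
proof -
  have "linear (\<lambda>X::complex^'n^'n. L ** X ** R)"
    by (rule linearI) (simp_all add: matrix_add_ldistrib matrix_add_rdistrib' mm_scaleR_right mm_scaleR_left)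
  then show ?thesis using linear_conv_bounded_linear by blast
qed

lemma bl_l: "bounded_linear (\<lambda>X::complex^'n^'n. (L::complex^'n^'m) ** X)"
  using bl_lr[of L "mat 1"] by simp

lemma bl_r: "bounded_linear (\<lambda>X::complex^'n^'n. X ** (R::complex^'k^'n))"
  using bl_lr[of "mat 1" R] by simp

lemma bl_adjm_r: "bounded_linear (\<lambda>X::complex^'n^'n. adjm X ** (R::complex^'k^'n))"
proof -
  have "linear (\<lambda>X::complex^'n^'n. adjm X ** R)"
    by (rule linearI) (simp_all add: adjm_add adjm_scaleR matrix_add_rdistrib' mm_scaleR_left)
  then show ?thesis using linear_conv_bounded_linear by blast
qed

lemma prod_good:
  assumes "is_prod Q"
  shows "\<exists>Qi. good Q Qi"
proof -
  have h: "\<And>u v. qform Q u v = cnj (qform Q v u)" using assms unfolding is_prod_def by blast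
  have p: "\<And>v. v \<noteq> 0 \<Longrightarrow> 0 < Re (qform Q v v)" using assms unfolding is_prod_def by blast
  have aq: "adjm Q = Q"
  proof -
    have "Q $ i $ j = cnj (Q $ j $ i)" for i j
    proof -
      have "Q $ i $ j = qform Q (axis j 1) (axis i 1)" by (simp only: qform_cin cin_axis_mat)
      also have "\<dots> = cnj (qform Q (axis i 1) (axis j 1))" by (rule h)
      also have "\<dots> = cnj (Q $ j $ i)" by (simp only: qform_cin cin_axis_mat)
      finally show ?thesis .
    qed
    note X = this
    have "cnj (Q $ j $ i) = Q $ i $ j" for i j by (rule X[symmetric])
    then show ?thesis by (simp add: adjm_def vec_eq_iff)
  qed
  have "\<forall>v. Q *v v = 0 \<longrightarrow> v = 0"
  proof (intro allI impI)
    fix v assume "Q *v v = 0"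
    then have "qform Q v v = 0" by (simp add: qform_cin)
    then show "v = 0" using p by fastforce
  qed
  then obtain B where B: "B ** Q = mat 1"
    using matrix_left_invertible_ker by blast
  then have "Q ** B = mat 1" using matrix_left_right_inverse by blast
  moreover have "\<forall>v. v \<noteq> 0 \<longrightarrow> 0 < Re (cin (Q *v v) v)" using p by (simp add: qform_cin)
  ultimately have "good Q B" using B aq unfolding good_def by blast
  then show ?thesis by blast
qed

lemma herm_iff:
  assumes "adjm Q = Q"
  shows "q_herm Q A \<longleftrightarrow> Q ** A = adjm A ** Q"
proof -
  have e: "qform Q u (A *v v) = cin ((adjm A ** Q) *v u) v" for u v
  proof -
    have "qform Q u (A *v v) = cin (Q *v u) (adjm (adjm A) *v v)" by (simp add: qform_cin)
    also have "\<dots> = cin (adjm A *v (Q *v u)) v" by (rule cin_adj[symmetric])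
    finally show ?thesis by (simp add: matrix_vector_mul_assoc)
  qed
  have e2: "qform Q (A *v u) v = cin ((Q ** A) *v u) v" for u v
    by (simp add: qform_cin matrix_vector_mul_assoc)
  show ?thesis
  proof
    assume "q_herm Q A"
    then have "cin ((Q ** A) *v u) v = cin ((adjm A ** Q) *v u) v" for u v
      using e e2 unfolding q_herm_def by metis
    then show "Q ** A = adjm A ** Q" by (rule mat_eq_cin)
  next
    assume "Q ** A = adjm A ** Q"
    then show "q_herm Q A" unfolding q_herm_def using e e2 by metis
  qed
qed

lemma mpow_comm: "A ** mpow A k = mpow A k ** A"
  by (induct k) (simp_all add: matrix_mul_assoc)

lemma mpow_herm:
  assumes "Q ** A = adjm A ** Q"
  shows "Q ** mpow A k = adjm (mpow A k) ** Q"
proof (induct k)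
  case 0 then show ?case by simp
next
  case (Suc k)
  have "Q ** mpow A (Suc k) = (Q ** A) ** mpow A k" by (simp add: matrix_mul_assoc)
  also have "\<dots> = adjm A ** (Q ** mpow A k)" by (simp add: assms matrix_mul_assoc)
  also have "\<dots> = adjm A ** adjm (mpow A k) ** Q" by (simp add: Suc matrix_mul_assoc)
  also have "\<dots> = adjm (mpow A k ** A) ** Q" by (simp add: adjm_mult)
  also have "\<dots> = adjm (mpow A (Suc k)) ** Q" by (simp add: mpow_comm)
  finally show ?case .
qed

lemma mexp_herm:
  assumes "Q ** A = adjm A ** Q"
  shows "Q ** mexp A = adjm (mexp A) ** Q"
proof -
  have s1: "(\<lambda>k. Q ** ((1 / fact k) *\<^sub>R mpow A k)) sums (Q ** mexp A)"
    by (rule bounded_linear.sums[OF bl_l mexp_sums])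
  have s2: "(\<lambda>k. adjm ((1 / fact k) *\<^sub>R mpow A k) ** Q) sums (adjm (mexp A) ** Q)"
    by (rule bounded_linear.sums[OF bl_adjm_r mexp_sums])
  have "Q ** ((1 / fact k) *\<^sub>R mpow A k) = adjm ((1 / fact k) *\<^sub>R mpow A k) ** Q" for k
    by (simp add: mm_scaleR_right mm_scaleR_left adjm_scaleR mpow_herm[OF assms])
  then have "(\<lambda>k. Q ** ((1 / fact k) *\<^sub>R mpow A k)) = (\<lambda>k. adjm ((1 / fact k) *\<^sub>R mpow A k) ** Q)"
    by (rule ext)
  with s1 have "(\<lambda>k. adjm ((1 / fact k) *\<^sub>R mpow A k) ** Q) sums (Q ** mexp A)" by simp
  from sums_unique2[OF this s2] show ?thesis .
qed

definition cinv :: "complex^'r^'r \<Rightarrow> complex^'r^'r" where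
  "cinv M = (\<chi> k j. det (\<chi> a b. if b = k then axis j 1 $ a else M $ a $ b) / det M)"


lemma cinv_right:
  assumes "det M \<noteq> 0"
  shows "M ** cinv M = mat 1"
proof -
  have c: "M *v (\<chi> k. cinv M $ k $ j) = axis j 1" for j
  proof -
    have e: "(\<chi> k. cinv M $ k $ j) = (\<chi> k. det (\<chi> i l. if l = k then axis j 1 $ i else M $ i $ l) / det M)"
      unfolding cinv_def by (simp only: vec_lambda_beta)
    show ?thesis unfolding e by (rule cramer[OF assms, THEN iffD2, OF refl])
  qed
  have "(M ** cinv M) $ i $ j = mat 1 $ i $ j" for i j
  proof -
    have "(M ** cinv M) $ i $ j = (M *v (\<chi> k. cinv M $ k $ j)) $ i"
      by (simp add: matrix_matrix_mult_def matrix_vector_mult_def)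
    also have "\<dots> = axis j 1 $ i" by (simp only: c)
    also have "\<dots> = mat 1 $ i $ j" by (simp add: axis_def mat_def)
    finally show ?thesis .
  qed
  then show ?thesis by (simp add: vec_eq_iff)
qed

lemma det_nz_inj:
  fixes M :: "complex^'r^'r"
  assumes "\<And>y. M *v y = 0 \<Longrightarrow> y = 0"
  shows "det M \<noteq> 0"
proof -
  obtain B where "B ** M = mat 1" using assms matrix_left_invertible_ker by blast
  then have "invertible M" using invertible_left_inverse by blast
  then show ?thesis using invertible_det_nz by blast
qed


lemma mv_smult: "(M::complex^'n^'m) *v (c *s v) = c *s (M *v v)"
  by (simp add: vec_eq_iff matrix_vector_mult_def sum_distrib_left mult_ac)

lemma good_adjQi: "good Q Qi \<Longrightarrow> adjm Qi = Qi"
proof -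
  assume g: "good Q Qi"
  then have aQ: "adjm Q = Q" and QQi: "Q ** Qi = mat 1" unfolding good_def by auto
  have "adjm Qi = adjm Qi ** (Q ** Qi)" by (simp add: QQi)
  also have "\<dots> = (adjm Qi ** adjm Q) ** Qi" by (simp add: aQ matrix_mul_assoc)
  also have "\<dots> = adjm (Q ** Qi) ** Qi" by (simp only: adjm_mult)
  also have "\<dots> = Qi" by (simp add: QQi)
  finally show ?thesis .
qed

lemma good_sym: "good Q Qi \<Longrightarrow> cin (Q *v u) v = cnj (cin (Q *v v) u)"
proof -
  assume g: "good Q Qi"
  have "cin (Q *v u) v = cin u (adjm Q *v v)" by (rule cin_adj)
  also have "\<dots> = cin u (Q *v v)" using g by (simp add: good_def)
  also have "\<dots> = cnj (cin (Q *v v) u)" by (simp add: cin_cnj)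
  finally show ?thesis .
qed

lemma good_nonneg: "good Q Qi \<Longrightarrow> 0 \<le> Re (cin (Q *v v) v)"
  unfolding good_def by (cases "v = 0") (auto intro: less_imp_le)

lemma good_pos: "good Q Qi \<Longrightarrow> cin (Q *v v) v = 0 \<Longrightarrow> v = 0"
  unfolding good_def by force

lemma good_posQi: "good Q Qi \<Longrightarrow> cin (Qi *v z) z = 0 \<Longrightarrow> z = 0"
proof -
  assume g: "good Q Qi" and z: "cin (Qi *v z) z = 0"
  define w where "w = Qi *v z"
  have zw: "z = Q *v w" using g by (simp add: w_def good_def matrix_vector_mul_assoc)
  have "cin (Q *v w) w = cnj (cin w (Q *v w))" by (simp add: cin_cnj)
  also have "cin w (Q *v w) = cin (Qi *v z) z" by (simp only: zw[symmetric] w_def[symmetric])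
  also have "\<dots> = 0" by (rule z)
  finally have "cin (Q *v w) w = 0" by simp
  then have "w = 0" using g good_pos by blast
  then show "z = 0" using zw by simp
qed

lemma qf_diff_left: "qform Q (a - b) w = qform Q a w - qform Q b w"
  by (simp add: qform_cin matrix_vector_mult_diff_distrib cin_diff_left)

lemma qf_diff_right: "qform Q s (a - b) = qform Q s a - qform Q s b"
  by (simp add: qform_cin cin_diff_right)

lemma qproj_unique:
  assumes g: "good Q Qi"
    and W: "\<And>a b. a \<in> W \<Longrightarrow> b \<in> W \<Longrightarrow> a - b \<in> W"
    and P: "\<forall>v. P *v v \<in> W \<and> (\<forall>w\<in>W. qform Q (v - P *v v) w = 0)"
  shows "qproj Q W = P"
  unfolding qproj_def
proof (rule the_equality)
  show "\<forall>v. P *v v \<in> W \<and> (\<forall>w\<in>W. qform Q (v - P *v v) w = 0)" by (rule P)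
next
  fix P' assume P': "\<forall>v. P' *v v \<in> W \<and> (\<forall>w\<in>W. qform Q (v - P' *v v) w = 0)"
  have "P' *v v = P *v v" for v
  proof -
    define z where "z = P' *v v - P *v v"
    have zW: "z \<in> W" using W P P' z_def by blast
    have "qform Q (v - P *v v) z - qform Q (v - P' *v v) z = 0" using P P' zW by simp
    then have "qform Q ((v - P *v v) - (v - P' *v v)) z = 0" by (simp add: qf_diff_left)
    then have "qform Q z z = 0" by (simp add: z_def)
    then have "z = 0" using g good_pos by (simp add: qform_cin) blast
    then show ?thesis by (simp add: z_def)
  qed
  then show "P' = P" by (simp add: matrix_eq)
qed

lemma Vsp_diff: "a \<in> Vsp Q Ev x \<Longrightarrow> b \<in> Vsp Q Ev x \<Longrightarrow> a - b \<in> Vsp Q Ev x"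
  by (simp add: Vsp_def qf_diff_right)

lemma proj_formula:
  fixes E :: "complex^'n^'r"
  assumes g: "good Q Qi" and surj: "\<forall>e. \<exists>s. E *v s = e" and Ex: "Ev x = E"
  shows "det (E ** Qi ** adjm E) \<noteq> 0"
    and "qproj Q (Vsp Q Ev x) = Qi ** adjm E ** cinv (E ** Qi ** adjm E) ** E"
    and "\<forall>v. (Qi ** adjm E ** cinv (E ** Qi ** adjm E) ** E) *v v \<in> Vsp Q Ev x \<and>
           (\<forall>w\<in>Vsp Q Ev x. qform Q (v - (Qi ** adjm E ** cinv (E ** Qi ** adjm E) ** E) *v v) w = 0)"
proof -
  define Mm where "Mm = E ** Qi ** adjm E"
  have inj: "y = 0" if y: "Mm *v y = 0" for y
  proof -
    have "cin (Mm *v y) y = cin (Qi *v (adjm E *v y)) (adjm E *v y)"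
      by (simp add: Mm_def matrix_vector_mul_assoc[symmetric] cin_adj)
    then have "cin (Qi *v (adjm E *v y)) (adjm E *v y) = 0" using y by simp
    then have h: "adjm E *v y = 0" using g good_posQi by blast
    obtain s where s: "E *v s = y" using surj by blast
    have "cin y y = cin s (adjm E *v y)" using s cin_adj by metis
    then have "cin y y = 0" using h by simp
    then show "y = 0" by (rule cin_self_eq0)
  qed
  then show dnz: "det (E ** Qi ** adjm E) \<noteq> 0" unfolding Mm_def[symmetric] by (rule det_nz_inj)
  have MR: "Mm ** cinv Mm = mat 1" using dnz cinv_right unfolding Mm_def by blast
  define P where "P = Qi ** adjm E ** cinv Mm ** E"
  have EP: "E ** P = E"
  proof -
    have "E ** P = (Mm ** cinv Mm) ** E" by (simp add: P_def Mm_def matrix_mul_assoc)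
    then show ?thesis using MR by simp
  qed
  have Qi_adj: "adjm Qi = Qi" using g by (rule good_adjQi)
  have QiQ: "Qi ** Q = mat 1" using g by (simp add: good_def)
  have PP: "\<forall>v. P *v v \<in> Vsp Q Ev x \<and> (\<forall>w\<in>Vsp Q Ev x. qform Q (v - P *v v) w = 0)"
  proof (intro allI conjI ballI)
    fix v
    define y where "y = cinv Mm *v (E *v v)"
    have Pv: "P *v v = Qi *v (adjm E *v y)" by (simp add: P_def y_def matrix_vector_mul_assoc matrix_mul_assoc)
    show "P *v v \<in> Vsp Q Ev x"
      unfolding Vsp_def ker_ev_def
    proof (intro CollectI ballI)
      fix s assume "s \<in> {s. Ev x *v s = 0}"
      then have s0: "E *v s = 0" using Ex by simp
      have "qform Q s (P *v v) = cin (Q *v s) (Qi *v (adjm E *v y))" by (simp add: qform_cin Pv)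
      also have "\<dots> = cin (adjm Qi *v (Q *v s)) (adjm E *v y)" by (rule cin_adj2)
      also have "\<dots> = cin s (adjm E *v y)" by (simp add: Qi_adj matrix_vector_mul_assoc QiQ)
      also have "\<dots> = cin (E *v s) y" by (metis cin_adj2 adjm_adjm)
      also have "\<dots> = 0" using s0 by simp
      finally show "qform Q s (P *v v) = 0" .
    qed
    fix w assume w: "w \<in> Vsp Q Ev x"
    have "E *v (v - P *v v) = 0"
      by (simp add: matrix_vector_mult_diff_distrib matrix_vector_mul_assoc EP)
    then show "qform Q (v - P *v v) w = 0" using w Ex unfolding Vsp_def ker_ev_def by simp
  qed
  show "\<forall>v. (Qi ** adjm E ** cinv (E ** Qi ** adjm E) ** E) *v v \<in> Vsp Q Ev x \<and>
           (\<forall>w\<in>Vsp Q Ev x. qform Q (v - (Qi ** adjm E ** cinv (E ** Qi ** adjm E) ** E) *v v) w = 0)"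
    using PP unfolding P_def Mm_def by blast
  have "qproj Q (Vsp Q Ev x) = P" by (rule qproj_unique[OF g Vsp_diff PP])
  then show "qproj Q (Vsp Q Ev x) = Qi ** adjm E ** cinv (E ** Qi ** adjm E) ** E"
    by (simp add: P_def Mm_def)
qed


lemma FS_formula:
  assumes g: "good Q Qi" and surj: "\<forall>e. \<exists>s. Ev x *v s = e"
  shows "FS Q Ev x = cinv (Ev x ** Qi ** adjm (Ev x))"
proof -
  define E where "E = Ev x"
  define R where "R = cinv (E ** Qi ** adjm E)"
  have surjE: "\<forall>e. \<exists>s. E *v s = e" unfolding E_def by (rule surj)
  have P: "qproj Q (Vsp Q Ev x) = Qi ** adjm E ** R ** E"
    unfolding R_def by (rule proj_formula(2)[where Ev=Ev and x=x, OF g surjE E_def[symmetric]])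
  have QQi: "Q ** Qi = mat 1" using g by (simp add: good_def)
  have QP: "Q ** (Qi ** adjm E ** R ** E) = adjm E ** R ** E"
    by (simp add: matrix_mul_assoc QQi)
  have sE: "E *v (SOME s. E *v s = axis b 1) = axis b 1" for b
    using surjE by (meson someI_ex)
  have "FS Q Ev x $ a $ b = R $ a $ b" for a b
  proof -
    let ?sa = "SOME s. E *v s = axis a 1" and ?sb = "SOME s. E *v s = axis b 1"
    have "FS Q Ev x $ a $ b = cin (Q *v ((Qi ** adjm E ** R ** E) *v ?sb)) ?sa"
      by (simp add: FS_def P qform_cin E_def)
    also have "\<dots> = cin ((adjm E ** R ** E) *v ?sb) ?sa"
      by (simp only: matrix_vector_mul_assoc QP)
    also have "\<dots> = cin (adjm E *v (R *v (E *v ?sb))) ?sa"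
      by (simp only: matrix_vector_mul_assoc matrix_mul_assoc)
    also have "\<dots> = cin (R *v (E *v ?sb)) (E *v ?sa)"
      by (metis cin_adj adjm_adjm)
    also have "\<dots> = cin (R *v axis b 1) (axis a 1)" by (simp only: sE)
    also have "\<dots> = R $ a $ b" by (rule cin_axis_mat)
    finally show ?thesis .
  qed
  then show ?thesis by (simp add: vec_eq_iff R_def E_def)
qed

lemma Hilb_integrand:
  assumes g: "good Q Qi" and surj: "\<forall>e. \<exists>s. Ev x *v s = e"
  shows "qform (FS Q Ev x) (Ev x *v axis j 1) (Ev x *v axis i 1)
       = (adjm (Ev x) ** cinv (Ev x ** Qi ** adjm (Ev x)) ** Ev x) $ i $ j"
proof -
  define E where "E = Ev x"
  define R where "R = cinv (E ** Qi ** adjm E)"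
  have "qform (FS Q Ev x) (Ev x *v axis j 1) (Ev x *v axis i 1) = cin (R *v (E *v axis j 1)) (E *v axis i 1)"
    using FS_formula[where Ev=Ev and x=x, OF g surj] by (simp add: qform_cin R_def E_def)
  also have "\<dots> = cin (adjm E *v (R *v (E *v axis j 1))) (axis i 1)" by (rule cin_adj2)
  also have "\<dots> = ((adjm E ** R ** E) *v axis j 1) $ i" by (simp add: cin_axis matrix_vector_mul_assoc matrix_mul_assoc)
  also have "\<dots> = (adjm E ** R ** E) $ i $ j" by (rule mv_axis)
  finally show ?thesis by (simp add: R_def E_def)
qed

lemma expand_q:
  assumes g: "good Q Qi"
  shows "cin (Q *v (u + c *s v)) (u + c *s v) = cin (Q *v u) u + (c * cnj c) * cin (Q *v v) v
          + cnj c * cin (Q *v u) v + c * cnj (cin (Q *v u) v)"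
proof -
  have s: "cin (Q *v v) u = cnj (cin (Q *v u) v)" using good_sym[OF g] by (metis complex_cnj_cnj)
  show ?thesis
    by (simp add: matrix_vector_right_distrib mv_smult cin_add_left cin_add_right cin_smult_left
        cin_smult_right s algebra_simps)
qed

lemma cs_q:
  assumes g: "good Q Qi"
  shows "cmod (cin (Q *v u) v) \<le> Re (cin (Q *v u) u) + Re (cin (Q *v v) v)"
proof -
  define z where "z = cin (Q *v u) v"
  define A where "A = Re (cin (Q *v u) u)"
  define B where "B = Re (cin (Q *v v) v)"
  have nn: "0 \<le> Re (cin (Q *v (u + c *s v)) (u + c *s v))" for c
    by (rule good_nonneg[OF g])
  have e: "Re (cin (Q *v (u + c *s v)) (u + c *s v)) = A + Re (c * cnj c) * B + Re (cnj c * z + c * cnj z)"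
    if "Im (c * cnj c) = 0" for c
    using that by (simp add: expand_q[OF g] A_def B_def z_def)
  have h1: "0 \<le> A + B + 2 * Re z" using nn[of 1] e[of 1] by simp
  have h2: "0 \<le> A + B - 2 * Re z" using nn[of "-1"] e[of "-1"] by simp
  have h3: "0 \<le> A + B + 2 * Im z" using nn[of "\<i>"] e[of "\<i>"] by simp
  have h4: "0 \<le> A + B - 2 * Im z" using nn[of "-\<i>"] e[of "-\<i>"] by simp
  have "cmod z \<le> \<bar>Re z\<bar> + \<bar>Im z\<bar>" by (rule cmod_le)
  also have "\<dots> \<le> A + B" using h1 h2 h3 h4 by linarith
  finally show ?thesis by (simp add: z_def A_def B_def)
qed

lemma proj_bound:
  assumes g: "good Q Qi"
    and PP: "\<forall>v. P *v v \<in> W \<and> (\<forall>w\<in>W. qform Q (v - P *v v) w = 0)"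
  shows "cmod (cin (Q *v (P *v a)) b) \<le> Re (cin (Q *v a) a) + Re (cin (Q *v b) b)"
proof -
  have orth: "cin (Q *v (P *v a)) (v - P *v v) = 0" for a v
  proof -
    have "cin (Q *v (P *v a)) (v - P *v v) = cnj (cin (Q *v (v - P *v v)) (P *v a))"
      by (rule good_sym[OF g])
    also have "cin (Q *v (v - P *v v)) (P *v a) = 0" using PP by (simp add: qform_cin)
    finally show ?thesis by simp
  qed
  have s1: "cin (Q *v (P *v a)) b = cin (Q *v (P *v a)) (P *v b)"
    using orth[of a b] by (simp add: cin_diff_right)
  have s2: "Re (cin (Q *v (P *v v)) (P *v v)) \<le> Re (cin (Q *v v) v)" for v
  proof -
    define d where "d = v - P *v v"
    have vd: "v = P *v v + 1 *s d" by (simp add: d_def)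
    have o: "cin (Q *v (P *v v)) d = 0" using orth by (simp add: d_def)
    have "cin (Q *v v) v = cin (Q *v (P *v v)) (P *v v) + cin (Q *v d) d"
    proof -
      have vd': "P *v v + d = v" by (simp add: d_def)
      show ?thesis using expand_q[OF g, of "P *v v" 1 d] o by (simp add: vd')
    qed
    then show ?thesis using good_nonneg[OF g, of d] by simp
  qed
  have "cmod (cin (Q *v (P *v a)) b) \<le> Re (cin (Q *v (P *v a)) (P *v a)) + Re (cin (Q *v (P *v b)) (P *v b))"
    unfolding s1 by (rule cs_q[OF g])
  also have "\<dots> \<le> Re (cin (Q *v a) a) + Re (cin (Q *v b) b)" using s2[of a] s2[of b] by linarith
  finally show ?thesis .
qed


lemma meas_vec_iff:
  fixes f :: "'x \<Rightarrow> ('b::euclidean_space)^'n"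
  shows "f \<in> borel_measurable M \<longleftrightarrow> (\<forall>i. (\<lambda>x. f x $ i) \<in> borel_measurable M)"
proof
  assume f: "f \<in> borel_measurable M"
  show "\<forall>i. (\<lambda>x. f x $ i) \<in> borel_measurable M"
  proof
    fix i
    have "continuous_on UNIV (\<lambda>v::'b^'n. v $ i)"
      by (rule linear_continuous_on[OF bounded_linear_vec_nth])
    then show "(\<lambda>x. f x $ i) \<in> borel_measurable M" by (rule borel_measurable_continuous_on[OF _ f])
  qed
next
  assume h: "\<forall>i. (\<lambda>x. f x $ i) \<in> borel_measurable M"
  show "f \<in> borel_measurable M"
    unfolding borel_measurable_euclidean_space[where f=f]
  proof
    fix b :: "'b^'n" assume "b \<in> Basis"
    then obtain i u where b: "b = axis i u" unfolding Basis_vec_def by blast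
    have "(\<lambda>x. f x $ i \<bullet> u) \<in> borel_measurable M"
      using h by (intro borel_measurable_inner) auto
    then show "(\<lambda>x. f x \<bullet> b) \<in> borel_measurable M" by (simp add: b inner_axis)
  qed
qed

lemma meas_mat_iff:
  fixes f :: "'x \<Rightarrow> complex^'n^'m"
  shows "f \<in> borel_measurable M \<longleftrightarrow> (\<forall>i j. (\<lambda>x. f x $ i $ j) \<in> borel_measurable M)"
proof -
  have e: "\<And>i. (\<lambda>x. f x $ i) \<in> borel_measurable M \<longleftrightarrow> (\<forall>j. (\<lambda>x. f x $ i $ j) \<in> borel_measurable M)"
    by (rule meas_vec_iff)
  show ?thesis unfolding meas_vec_iff[of f M] e by blast
qed

lemma mm_meas:
  fixes f :: "'x \<Rightarrow> complex^'n^'m" and g :: "'x \<Rightarrow> complex^'k^'n"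
  assumes "f \<in> borel_measurable M" "g \<in> borel_measurable M"
  shows "(\<lambda>x. f x ** g x) \<in> borel_measurable M"
proof -
  have "(\<lambda>x. (f x ** g x) $ i $ j) \<in> borel_measurable M" for i j
  proof -
    have "(\<lambda>x. \<Sum>k\<in>UNIV. f x $ i $ k * g x $ k $ j) \<in> borel_measurable M"
      using assms unfolding meas_mat_iff by (intro borel_measurable_sum borel_measurable_times) auto
    then show ?thesis by (simp add: matrix_matrix_mult_def)
  qed
  then show ?thesis unfolding meas_mat_iff by blast
qed

lemma adjm_meas:
  fixes f :: "'x \<Rightarrow> complex^'n^'m"
  assumes "f \<in> borel_measurable M"
  shows "(\<lambda>x. adjm (f x)) \<in> borel_measurable M"
proof -
  have "(\<lambda>x. cnj (f x $ j $ i)) \<in> borel_measurable M" for i j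
    using assms unfolding meas_mat_iff
    by (intro borel_measurable_continuous_on[where f=cnj]) (auto intro: continuous_on_cnj continuous_on_id)
  then show ?thesis unfolding meas_mat_iff by (simp add: adjm_def)
qed

lemma det_meas:
  fixes f :: "'x \<Rightarrow> complex^'n^'n"
  assumes "f \<in> borel_measurable M"
  shows "(\<lambda>x. det (f x)) \<in> borel_measurable M"
  unfolding det_def
  using assms unfolding meas_mat_iff
  by (intro borel_measurable_sum borel_measurable_times borel_measurable_prod borel_measurable_const) auto

lemma cinv_meas:
  fixes f :: "'x \<Rightarrow> complex^'n^'n"
  assumes f: "f \<in> borel_measurable M"
  shows "(\<lambda>x. cinv (f x)) \<in> borel_measurable M"
proof -
  have "(\<lambda>x. det (\<chi> a b. if b = k then axis j 1 $ a else f x $ a $ b) / det (f x)) \<in> borel_measurable M" for k j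
  proof (intro borel_measurable_divide det_meas[OF f])
    have "(\<lambda>x. (\<chi> a b. if b = k then axis j 1 $ a else f x $ a $ b) :: complex^'n^'n) \<in> borel_measurable M"
      unfolding meas_mat_iff
    proof (intro allI)
      fix a b
      show "(\<lambda>x. (\<chi> a b. if b = k then axis j 1 $ a else f x $ a $ b) $ a $ b) \<in> borel_measurable M"
        using f unfolding meas_mat_iff by (cases "b = k") simp_all
    qed
    then show "(\<lambda>x. det (\<chi> a b. if b = k then axis j 1 $ a else f x $ a $ b)) \<in> borel_measurable M"
      by (rule det_meas)
  qed
  then show ?thesis unfolding meas_mat_iff by (simp add: cinv_def)
qed



lemma bb_mm: "bounded_bilinear (\<lambda>(A::complex^'n^'n) (B::complex^'n^'n). A ** B)"
proof -
  have "bilinear (\<lambda>(A::complex^'n^'n) (B::complex^'n^'n). A ** B)"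
    unfolding bilinear_def
    by (auto intro!: linearI simp: matrix_add_ldistrib matrix_add_rdistrib' mm_scaleR_right mm_scaleR_left)
  then show ?thesis using bilinear_conv_bounded_bilinear by blast
qed

lemma herm_scale: "Q ** A = adjm A ** Q \<Longrightarrow> Q ** (r *\<^sub>R A) = adjm (r *\<^sub>R A) ** Q"
  by (simp add: mm_scaleR_right mm_scaleR_left adjm_scaleR)

lemma mexp_half:
  "mexp ((t/2) *\<^sub>R A) ** mexp (((-t)/2) *\<^sub>R A) = mat 1"
  "mexp (((-t)/2) *\<^sub>R A) ** mexp ((t/2) *\<^sub>R A) = mat 1"
  "mexp ((t/2) *\<^sub>R A) ** mexp ((t/2) *\<^sub>R A) = mexp (t *\<^sub>R A)"
proof -
  have z: "t/2 + (-t)/2 = 0" "(-t)/2 + t/2 = 0" "t/2 + t/2 = t" by simp_all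
  show "mexp ((t/2) *\<^sub>R A) ** mexp (((-t)/2) *\<^sub>R A) = mat 1"
    unfolding mexp_add z by (simp add: mexp_zero)
  show "mexp (((-t)/2) *\<^sub>R A) ** mexp ((t/2) *\<^sub>R A) = mat 1"
    unfolding mexp_add z by (simp add: mexp_zero)
  show "mexp ((t/2) *\<^sub>R A) ** mexp ((t/2) *\<^sub>R A) = mexp (t *\<^sub>R A)"
    unfolding mexp_add z ..
qed

lemma Vsp_image:
  assumes FG: "F ** G = mat 1" and GF: "G ** F = mat 1"
    and hF: "Q ** F = adjm F ** Q" and hG: "Q ** G = adjm G ** Q"
  shows "(\<lambda>v. G *v v) ` Vsp Q Ev x = Vsp Q (\<lambda>y. Ev y ** G) x"
proof
  show "(\<lambda>v. G *v v) ` Vsp Q Ev x \<subseteq> Vsp Q (\<lambda>y. Ev y ** G) x"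
  proof
    fix v assume "v \<in> (\<lambda>v. G *v v) ` Vsp Q Ev x"
    then obtain u where u: "u \<in> Vsp Q Ev x" and v: "v = G *v u" by blast
    show "v \<in> Vsp Q (\<lambda>y. Ev y ** G) x"
      unfolding Vsp_def ker_ev_def
    proof (intro CollectI ballI)
      fix s assume "s \<in> {s. (Ev x ** G) *v s = 0}"
      then have s: "Ev x *v (G *v s) = 0" by (simp add: matrix_vector_mul_assoc)
      have "qform Q s v = cin (Q *v s) (G *v u)" by (simp add: qform_cin v)
      also have "\<dots> = cin (adjm G *v (Q *v s)) u" by (rule cin_adj2)
      also have "\<dots> = cin ((adjm G ** Q) *v s) u" by (simp add: matrix_vector_mul_assoc)
      also have "\<dots> = qform Q (G *v s) u" by (simp add: qform_cin matrix_vector_mul_assoc hG)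
      also have "\<dots> = 0" using u s unfolding Vsp_def ker_ev_def by simp
      finally show "qform Q s v = 0" .
    qed
  qed
  show "Vsp Q (\<lambda>y. Ev y ** G) x \<subseteq> (\<lambda>v. G *v v) ` Vsp Q Ev x"
  proof
    fix v assume v: "v \<in> Vsp Q (\<lambda>y. Ev y ** G) x"
    have "F *v v \<in> Vsp Q Ev x"
      unfolding Vsp_def ker_ev_def
    proof (intro CollectI ballI)
      fix k assume "k \<in> {s. Ev x *v s = 0}"
      have "(Ev x ** G) *v (F *v k) = Ev x *v ((G ** F) *v k)"
        by (simp only: matrix_vector_mul_assoc matrix_mul_assoc)
      then have k: "(Ev x ** G) *v (F *v k) = 0" using \<open>k \<in> _\<close> by (simp add: GF)
      have "qform Q k (F *v v) = cin (Q *v k) (F *v v)" by (simp add: qform_cin)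
      also have "\<dots> = cin (adjm F *v (Q *v k)) v" by (rule cin_adj2)
      also have "\<dots> = cin ((adjm F ** Q) *v k) v" by (simp add: matrix_vector_mul_assoc)
      also have "\<dots> = qform Q (F *v k) v" by (simp add: qform_cin matrix_vector_mul_assoc hF)
      also have "\<dots> = 0" using v k unfolding Vsp_def ker_ev_def by simp
      finally show "qform Q k (F *v v) = 0" .
    qed
    moreover have "v = G *v (F *v v)" by (simp add: matrix_vector_mul_assoc GF)
    ultimately show "v \<in> (\<lambda>v. G *v v) ` Vsp Q Ev x" by blast
  qed
qed

lemma good_Q':
  assumes g: "good Q Qi" and FG: "F ** G = mat 1" and GF: "G ** F = mat 1"
    and hF: "Q ** F = adjm F ** Q"
  shows "good (Q ** F ** F) (G ** G ** Qi)"
proof -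
  have aQ: "adjm Q = Q" and QQi: "Q ** Qi = mat 1" and QiQ: "Qi ** Q = mat 1"
    using g unfolding good_def by auto
  have "adjm (Q ** F ** F) = adjm F ** (adjm F ** Q)" by (simp add: adjm_mult aQ)
  also have "\<dots> = adjm F ** (Q ** F)" by (simp only: hF)
  also have "\<dots> = (adjm F ** Q) ** F" by (simp only: matrix_mul_assoc)
  also have "\<dots> = Q ** F ** F" by (simp only: hF)
  finally have a: "adjm (Q ** F ** F) = Q ** F ** F" .
  have b: "(Q ** F ** F) ** (G ** G ** Qi) = mat 1"
  proof -
    have "(Q ** F ** F) ** (G ** G ** Qi) = Q ** (F ** ((F ** G) ** (G ** Qi)))"
      by (simp only: matrix_mul_assoc)
    also have "\<dots> = Q ** Qi" by (simp add: FG matrix_mul_assoc)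
    finally show ?thesis by (simp add: QQi)
  qed
  have c: "(G ** G ** Qi) ** (Q ** F ** F) = mat 1"
  proof -
    have "(G ** G ** Qi) ** (Q ** F ** F) = G ** (G ** ((Qi ** Q) ** (F ** F)))"
      by (simp only: matrix_mul_assoc)
    also have "\<dots> = G ** ((G ** F) ** F)" by (simp add: QiQ matrix_mul_assoc)
    finally show ?thesis by (simp add: GF)
  qed
  have d: "0 < Re (cin ((Q ** F ** F) *v v) v)" if v: "v \<noteq> 0" for v
  proof -
    have Fv: "F *v v \<noteq> 0"
    proof
      assume "F *v v = 0"
      then have "G *v (F *v v) = 0" by simp
      then show False using v by (simp add: matrix_vector_mul_assoc GF)
    qed
    have e: "Q ** F ** F = adjm F ** Q ** F" by (simp only: hF)
    have "cin ((Q ** F ** F) *v v) v = cin (adjm F *v (Q *v (F *v v))) v"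
      unfolding e by (simp only: matrix_vector_mul_assoc matrix_mul_assoc)
    also have "\<dots> = cin (Q *v (F *v v)) (F *v v)" by (metis cin_adj adjm_adjm)
    finally show ?thesis using g Fv unfolding good_def by simp
  qed
  show ?thesis unfolding good_def using a b c d by blast
qed


lemma key_pt:
  assumes g: "good Q Qi" and FG: "F ** G = mat 1" and GF: "G ** F = mat 1"
    and hF: "Q ** F = adjm F ** Q" and hG: "Q ** G = adjm G ** Q"
    and surj: "\<forall>e. \<exists>s. Ev x *v s = e"
  shows "adjm (Ev x) ** cinv (Ev x ** (G ** G ** Qi) ** adjm (Ev x)) ** Ev x
        = adjm F ** Q ** qproj Q ((\<lambda>v. G *v v) ` Vsp Q Ev x) ** F"
proof -
  have QQi: "Q ** Qi = mat 1" and QiQ: "Qi ** Q = mat 1" using g unfolding good_def by auto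
  define E where "E = Ev x"
  define E' where "E' = E ** G"
  have surj': "\<forall>e. \<exists>s. E' *v s = e"
  proof
    fix e
    obtain s where "Ev x *v s = e" using surj by blast
    then have "E' *v (F *v s) = e"
      by (simp add: E'_def E_def matrix_vector_mul_assoc matrix_mul_assoc[symmetric] GF)
    then show "\<exists>s. E' *v s = e" by blast
  qed
  have ev': "(\<lambda>y. Ev y ** G) x = E'" by (simp add: E'_def E_def)
  have Pi: "qproj Q ((\<lambda>v. G *v v) ` Vsp Q Ev x) = Qi ** adjm E' ** cinv (E' ** Qi ** adjm E') ** E'"
    unfolding Vsp_image[OF FG GF hF hG]
    by (rule proj_formula(2)[where Ev="\<lambda>y. Ev y ** G" and x=x, OF g surj' ev'])
  have aG: "adjm G = Q ** G ** Qi"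
  proof -
    have "adjm G = adjm G ** (Q ** Qi)" by (simp add: QQi)
    also have "\<dots> = (adjm G ** Q) ** Qi" by (simp only: matrix_mul_assoc)
    also have "\<dots> = Q ** G ** Qi" by (simp only: hG)
    finally show ?thesis .
  qed
  have r1: "X ** Qi ** Q = X" for X
    by (simp add: matrix_mul_assoc[symmetric] QiQ)
  have r2: "X ** G ** F = X" for X
    by (simp add: matrix_mul_assoc[symmetric] GF)
  have r4: "X ** Q ** Qi = X" for X
    by (simp add: matrix_mul_assoc[symmetric] QQi)
  have aFG: "adjm F ** adjm G = mat 1" by (simp add: adjm_mult[symmetric] GF)
  have r5: "X ** adjm F ** adjm G = X" for X
    by (simp add: matrix_mul_assoc[symmetric] aFG)
  have M: "E' ** Qi ** adjm E' = E ** (G ** G ** Qi) ** adjm E"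
  proof -
    have "E' ** Qi ** adjm E' = E ** G ** Qi ** (Q ** G ** Qi) ** adjm E"
      by (simp only: E'_def adjm_mult aG matrix_mul_assoc)
    also have "\<dots> = E ** G ** Qi ** Q ** G ** Qi ** adjm E" by (simp only: matrix_mul_assoc)
    also have "\<dots> = E ** G ** G ** Qi ** adjm E" by (simp only: r1)
    also have "\<dots> = E ** (G ** G ** Qi) ** adjm E" by (simp only: matrix_mul_assoc)
    finally show ?thesis .
  qed
  define R where "R = cinv (E ** (G ** G ** Qi) ** adjm E)"
  have "adjm F ** Q ** qproj Q ((\<lambda>v. G *v v) ` Vsp Q Ev x) ** F
      = adjm F ** Q ** (Qi ** (adjm G ** adjm E) ** R ** (E ** G)) ** F"
    unfolding Pi M R_def[symmetric] by (simp only: E'_def adjm_mult)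
  also have "\<dots> = adjm F ** Q ** Qi ** adjm G ** adjm E ** R ** E ** G ** F"
    by (simp only: matrix_mul_assoc)
  also have "\<dots> = adjm F ** adjm G ** adjm E ** R ** E"
    by (simp only: r4 r2)
  also have "\<dots> = adjm E ** R ** E"
    by (simp only: aFG matrix_mul_lid)
  finally show ?thesis by (simp add: R_def E_def)
qed


lemma bl_entry: "bounded_linear (\<lambda>M::complex^'n^'m. M $ i $ j)"
  using bounded_linear_compose[OF bounded_linear_vec_nth[of j] bounded_linear_vec_nth[of i]] by simp

lemma Tmap_identity:
  fixes \<nu> :: "'x measure" and Ev :: "'x \<Rightarrow> complex^'n^'r"
  assumes fm: "finite_measure \<nu>" and Evm: "Ev \<in> borel_measurable \<nu>"
    and surj: "\<forall>x\<in>space \<nu>. \<forall>e. \<exists>s. Ev x *v s = e"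
    and g: "good Q Qi" and FG: "F ** G = mat 1" and GF: "G ** F = mat 1"
    and hF: "Q ** F = adjm F ** Q" and hG: "Q ** G = adjm G ** Q"
  shows "Tmap \<nu> Ev (Q ** F ** F)
     = (real CARD('n) / (measure \<nu> (space \<nu>) * real CARD('r))) *\<^sub>R (adjm F ** Q ** mu \<nu> Q Ev G ** F)"
proof -
  define c where "c = real CARD('n) / (measure \<nu> (space \<nu>) * real CARD('r))"
  define Q' where "Q' = Q ** F ** F"
  define Qi' where "Qi' = G ** G ** Qi"
  have g': "good Q' Qi'" unfolding Q'_def Qi'_def by (rule good_Q'[OF g FG GF hF])
  have Q'Qi': "Q' ** Qi' = mat 1" using g' unfolding good_def by auto
  define K where "K x = adjm (Ev x) ** cinv (Ev x ** Qi' ** adjm (Ev x)) ** Ev x" for x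
  define Pi where "Pi x = qproj Q ((\<lambda>v. G *v v) ` Vsp Q Ev x)" for x
  define L where "L X = adjm F ** Q ** X ** F" for X :: "complex^'n^'n"
  have h1: "qform (FS Q' Ev x) (Ev x *v axis j 1) (Ev x *v axis i 1) = K x $ i $ j"
    if x: "x \<in> space \<nu>" for x i j
    unfolding K_def by (rule Hilb_integrand[where Ev=Ev and x=x, OF g']) (use surj x in blast)
  have h2: "K x = L (Pi x)" if x: "x \<in> space \<nu>" for x
    unfolding K_def L_def Pi_def Qi'_def
    by (rule key_pt[where Ev=Ev and x=x, OF g FG GF hF hG]) (use surj x in blast)
  have Kmeas: "K \<in> borel_measurable \<nu>"
    unfolding K_def by (intro mm_meas adjm_meas cinv_meas Evm borel_measurable_const)
  define b where "b i = Re (cin (Q' *v axis i 1) (axis i 1))" for i :: 'n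
  define B0 where "B0 = (\<Sum>i\<in>(UNIV::'n set). \<Sum>j\<in>(UNIV::'n set). b j + b i)"
  have Kbound: "norm (K x) \<le> B0" if x: "x \<in> space \<nu>" for x
  proof -
    define E where "E = Ev x"
    define P' where "P' = Qi' ** adjm E ** cinv (E ** Qi' ** adjm E) ** E"
    have sx: "\<forall>e. \<exists>s. E *v s = e" using surj x unfolding E_def by blast
    have PP: "\<forall>v. P' *v v \<in> Vsp Q' Ev x \<and> (\<forall>w\<in>Vsp Q' Ev x. qform Q' (v - P' *v v) w = 0)"
      unfolding P'_def by (rule proj_formula(3)[where Ev=Ev and x=x, OF g' sx E_def[symmetric]])
    have KQ: "K x = Q' ** P'"
      by (simp only: K_def P'_def E_def matrix_mul_assoc Q'Qi' matrix_mul_lid)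
    have ent: "cmod (K x $ i $ j) \<le> b j + b i" for i j
    proof -
      have "K x $ i $ j = cin (Q' *v (P' *v axis j 1)) (axis i 1)"
        by (simp add: KQ cin_axis_mat matrix_vector_mul_assoc)
      then show ?thesis using proj_bound[OF g' PP, of "axis j 1" "axis i 1"] by (simp add: b_def)
    qed
    have "norm (K x) \<le> (\<Sum>i\<in>UNIV. norm (K x $ i))" by (rule norm_vec_le_sum)
    also have "\<dots> \<le> (\<Sum>i\<in>UNIV. \<Sum>j\<in>UNIV. norm (K x $ i $ j))"
      by (rule sum_mono) (rule norm_vec_le_sum)
    also have "\<dots> \<le> B0" unfolding B0_def
      by (intro sum_mono) (simp add: ent)
    finally show ?thesis .
  qed
  have Kint: "integrable \<nu> K"
    by (rule finite_measure.integrable_const_bound[OF fm _ Kmeas]) (use Kbound in auto)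
  have "Tmap \<nu> Ev Q' = c *\<^sub>R (\<chi> i j. integral\<^sup>L \<nu> (\<lambda>x. qform (FS Q' Ev x) (Ev x *v axis j 1) (Ev x *v axis i 1)))"
    by (simp add: Tmap_def Hilb_def c_def)
  also have "(\<chi> i j. integral\<^sup>L \<nu> (\<lambda>x. qform (FS Q' Ev x) (Ev x *v axis j 1) (Ev x *v axis i 1)))
      = (\<chi> i j. integral\<^sup>L \<nu> (\<lambda>x. K x $ i $ j))"
    by (simp add: vec_eq_iff h1 cong: Bochner_Integration.integral_cong)
  also have "\<dots> = integral\<^sup>L \<nu> K"
  proof -
    have "integral\<^sup>L \<nu> (\<lambda>x. K x $ i $ j) = integral\<^sup>L \<nu> K $ i $ j" for i j
      by (rule integral_bounded_linear[OF bl_entry Kint])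
    then show ?thesis by (simp add: vec_eq_iff)
  qed
  also have "\<dots> = integral\<^sup>L \<nu> (\<lambda>x. L (Pi x))"
    by (rule Bochner_Integration.integral_cong) (simp_all add: h2)
  also have "\<dots> = L (integral\<^sup>L \<nu> Pi)"
  proof (rule integral_bounded_linear')
    show "bounded_linear L" unfolding L_def by (rule bl_lr)
    show "bounded_linear (\<lambda>Y. Qi ** adjm G ** Y ** G)" by (rule bl_lr)
    have QiQ: "Qi ** Q = mat 1" using g unfolding good_def by auto
    have aGF: "adjm G ** adjm F = mat 1" by (simp add: adjm_mult[symmetric] FG)
    show "\<forall>X. Qi ** adjm G ** L X ** G = X"
    proof
      fix X
      have "Qi ** adjm G ** L X ** G = Qi ** (adjm G ** adjm F) ** Q ** X ** (F ** G)"
        by (simp only: L_def matrix_mul_assoc)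
      then show "Qi ** adjm G ** L X ** G = X" by (simp add: aGF FG QiQ)
    qed
  qed
  also have "integral\<^sup>L \<nu> Pi = mu \<nu> Q Ev G"
  proof -
    have "Pi = (\<lambda>x. qproj Q ((\<lambda>v. G *v v) ` Vsp Q Ev x))" by (rule ext) (simp add: Pi_def)
    then show ?thesis by (simp add: mu_def)
  qed
  finally show ?thesis by (simp add: Q'_def c_def L_def)
qed


theorem proposition4p13:
  fixes \<nu> :: "'x measure" and Ev :: "'x \<Rightarrow> complex^'n^'r"
    and Q A DM B :: "complex^'n^'n"
  assumes "finite_measure \<nu>"
    and "0 < measure \<nu> (space \<nu>)"
    and "Ev \<in> borel_measurable \<nu>"
    and "\<forall>x\<in>space \<nu>. \<forall>e. \<exists>s. Ev x *v s = e"
    and "is_prod Q"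
    and "balanced \<nu> Ev Q"
    and "q_herm Q A"
    and "((\<lambda>t. mu \<nu> Q Ev (mexp ((t / 2) *\<^sub>R A))) has_vector_derivative DM) (at 0)"
    and "q_herm Q B"
    and "((\<lambda>t. Tmap \<nu> Ev (Q ** mexp (t *\<^sub>R A))) has_vector_derivative (Q ** B)) (at 0)"
  shows "(real CARD('n) / (measure \<nu> (space \<nu>) * real CARD('r))) *\<^sub>R DM = A - B"
proof -
  note fm = assms(1) and Evm = assms(3) and surj = assms(4) and bal = assms(6)
    and dmu = assms(8) and dT = assms(10)
  obtain Qi where g: "good Q Qi" using prod_good[OF assms(5)] by blast
  have aQ: "adjm Q = Q" and QiQ: "Qi ** Q = mat 1" using g unfolding good_def by auto
  have hA: "Q ** A = adjm A ** Q" using herm_iff[OF aQ] assms(7) by blast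
  define c where "c = real CARD('n) / (measure \<nu> (space \<nu>) * real CARD('r))"
  define F where "F t = mexp ((t/2) *\<^sub>R A)" for t
  define m where "m s = mu \<nu> Q Ev (mexp ((s/2) *\<^sub>R A))" for s
  have hF: "Q ** F t = adjm (F t) ** Q" for t
    unfolding F_def by (rule mexp_herm[OF herm_scale[OF hA]])
  have ident: "Tmap \<nu> Ev (Q ** mexp (t *\<^sub>R A)) = c *\<^sub>R (Q ** (F t ** (m (-t) ** F t)))" for t
  proof -
    define G where "G = mexp (((-t)/2) *\<^sub>R A)"
    have hG: "Q ** G = adjm G ** Q"
      unfolding G_def by (rule mexp_herm[OF herm_scale[OF hA]])
    have FG: "F t ** G = mat 1" and GF: "G ** F t = mat 1" and FF: "F t ** F t = mexp (t *\<^sub>R A)"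
      unfolding F_def G_def by (rule mexp_half)+
    have "Tmap \<nu> Ev (Q ** F t ** F t) = c *\<^sub>R (adjm (F t) ** Q ** mu \<nu> Q Ev G ** F t)"
      unfolding c_def by (rule Tmap_identity[OF fm Evm surj g FG GF hF hG])
    moreover have "Q ** F t ** F t = Q ** mexp (t *\<^sub>R A)" by (simp add: FF matrix_mul_assoc[symmetric])
    moreover have "adjm (F t) ** Q ** mu \<nu> Q Ev G ** F t = Q ** (F t ** (m (-t) ** F t))"
      by (simp add: hF[symmetric] m_def G_def matrix_mul_assoc)
    ultimately show ?thesis by simp
  qed
  have F0: "F 0 = mat 1" by (simp add: F_def mexp_zero)
  define X where "X = m 0"
  have cX: "c *\<^sub>R X = mat 1"
  proof -
    have "Q = Tmap \<nu> Ev (Q ** mexp (0 *\<^sub>R A))" using bal by (simp add: balanced_def mexp_zero)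
    also have "\<dots> = c *\<^sub>R (Q ** X)" using ident[of 0] by (simp add: F0 X_def)
    finally have "Qi ** Q = Qi ** (c *\<^sub>R (Q ** X))" by simp
    then show ?thesis by (simp add: QiQ mm_scaleR_right matrix_mul_assoc)
  qed
  have dF: "(F has_vector_derivative ((1/2) *\<^sub>R A)) (at 0)"
  proof -
    have "F = (\<lambda>t. mexp (t *\<^sub>R ((1/2) *\<^sub>R A)))" by (rule ext) (simp add: F_def)
    then show ?thesis using mexp_deriv[of "(1/2) *\<^sub>R A"] by simp
  qed
  have dm: "((\<lambda>t. m (-t)) has_vector_derivative (-1) *\<^sub>R DM) (at 0)"
  proof -
    have n: "((\<lambda>t::real. - t) has_vector_derivative -1) (at 0)"
      using has_vector_derivative_minus[OF has_vector_derivative_id] by simp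
    have me: "m = (\<lambda>t. mu \<nu> Q Ev (mexp ((t / 2) *\<^sub>R A)))" by (rule ext) (simp add: m_def)
    have dm0: "(m has_vector_derivative DM) (at (- 0))" using dmu by (simp add: me)
    show ?thesis using vector_diff_chain_at[OF n dm0] by (simp add: o_def)
  qed
  interpret bb: bounded_bilinear "\<lambda>(A::complex^'n^'n) (B::complex^'n^'n). A ** B" by (rule bb_mm)
  have d1: "((\<lambda>t. m (-t) ** F t) has_vector_derivative (m (-0) ** ((1/2) *\<^sub>R A) + ((-1) *\<^sub>R DM) ** F 0)) (at 0)"
    using bb.has_vector_derivative[OF dm dF] by simp
  have d2: "((\<lambda>t. F t ** (m (-t) ** F t)) has_vector_derivative
      (F 0 ** (m (-0) ** ((1/2) *\<^sub>R A) + ((-1) *\<^sub>R DM) ** F 0) + ((1/2) *\<^sub>R A) ** (m (-0) ** F 0))) (at 0)"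
    using bb.has_vector_derivative[OF dF d1] by simp
  have d3: "((\<lambda>t. c *\<^sub>R (Q ** (F t ** (m (-t) ** F t)))) has_vector_derivative
      c *\<^sub>R (Q ** (F 0 ** (m (-0) ** ((1/2) *\<^sub>R A) + ((-1) *\<^sub>R DM) ** F 0) + ((1/2) *\<^sub>R A) ** (m (-0) ** F 0)))) (at 0)"
    by (rule bounded_linear.has_vector_derivative[OF bounded_linear_scaleR_right]
          bounded_linear.has_vector_derivative[OF bl_l] d2)+
  have "(\<lambda>t. Tmap \<nu> Ev (Q ** mexp (t *\<^sub>R A))) = (\<lambda>t. c *\<^sub>R (Q ** (F t ** (m (-t) ** F t))))"
    by (rule ext) (rule ident)
  then have QB: "Q ** B = c *\<^sub>R (Q ** (X ** ((1/2) *\<^sub>R A) - DM + ((1/2) *\<^sub>R A) ** X))"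
    using vector_derivative_unique_at[OF dT] d3 by (simp add: F0 X_def)
  have "B = Qi ** (Q ** B)" by (simp add: matrix_mul_assoc QiQ)
  also have "\<dots> = c *\<^sub>R (X ** ((1/2) *\<^sub>R A) - DM + ((1/2) *\<^sub>R A) ** X)"
    by (simp add: QB mm_scaleR_right matrix_mul_assoc QiQ)
  also have "\<dots> = (c *\<^sub>R X) ** ((1/2) *\<^sub>R A) - c *\<^sub>R DM + ((1/2) *\<^sub>R A) ** (c *\<^sub>R X)"
    by (simp add: mm_scaleR_right mm_scaleR_left scaleR_diff_right scaleR_add_right)
  also have "\<dots> = (1/2) *\<^sub>R A + (1/2) *\<^sub>R A - c *\<^sub>R DM" by (simp add: cX)
  also have "\<dots> = A - c *\<^sub>R DM" by (simp add: scaleR_add_left[symmetric])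
  finally show ?thesis by (simp add: c_def)
qed

end
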